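(* Let $n\ge 2$ and $1\le r\le n$. Then for every vertex $v\in V(P_n^* )$, $$|\mathcal{I}^{(r)}_v(P_n^* )|\le |\mathcal{I}^{(r)}_{p_2}(P_n^* )| = |\mathcal{I}^{(r)}_{p_{n-1}}(P_n^* )|,$$ i.e. the $r$-stars centred at the pendant vertices $p_2$ and $p_{n-1}$ are $r$-stars of maximum size in $P_n^*$.
   Context: An independent $r$-set of a graph $G$ is a set of $r$ pairwise non-adjacent vertices; $\mathcal{I}^{(r)}(G)$ is the family of independent $r$-sets of $G$, and $\mathcal{I}^{(r)}_v(G)$ the subfamily of those containing $v$ (the $r$-star centred at $v$). For a graph $G$ with vertices $x_1,\dots,x_n$, the pendant graph $G^*$ has vertex set $\{x_1,\dots,x_n\}\sqcup\{p_1,\dots,p_n\}$ and edge set $E(G)\sqcup\{x_1p_1,\dots,x_np_n\}$. $P_n$ is the path with vertices $x_1,\dots,x_n$ and edges $x_ix_{i+1}$, $1\le i\le n-1$, and $P_n^*$ is its pendant graph. *)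

theory Defs
  imports Main
begin

text \<open>A (finite simple) graph is given by a vertex set V and a symmetric irreflexive
  adjacency relation E.\<close>

definition independent_rsets :: "'a set \<Rightarrow> ('a \<Rightarrow> 'a \<Rightarrow> bool) \<Rightarrow> nat \<Rightarrow> 'a set set" where
  "independent_rsets V E r =
     {A. A \<subseteq> V \<and> card A = r \<and> finite A \<and> (\<forall>x\<in>A. \<forall>y\<in>A. \<not> E x y)}"

definition independent_rstar :: "'a set \<Rightarrow> ('a \<Rightarrow> 'a \<Rightarrow> bool) \<Rightarrow> nat \<Rightarrow> 'a \<Rightarrow> 'a set set" where
  "independent_rstar V E r v = {A \<in> independent_rsets V E r. v \<in> A}"

text \<open>Vertices of the pendant graph: original vertices x_i and pendant vertices p_i.\<close>
datatype 'a pvert = X 'a | P 'a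

definition pendant_vertices :: "'a set \<Rightarrow> 'a pvert set" where
  "pendant_vertices V = X ` V \<union> P ` V"

fun pendant_adj :: "('a \<Rightarrow> 'a \<Rightarrow> bool) \<Rightarrow> 'a pvert \<Rightarrow> 'a pvert \<Rightarrow> bool" where
  "pendant_adj E (X a) (X b) = E a b"
| "pendant_adj E (X a) (P b) = (a = b)"
| "pendant_adj E (P a) (X b) = (a = b)"
| "pendant_adj E (P a) (P b) = False"

definition path_vertices :: "nat \<Rightarrow> nat set" where
  "path_vertices n = {1..n}"

definition path_adj :: "nat \<Rightarrow> nat \<Rightarrow> bool" where
  "path_adj i j = (j = i + 1 \<or> i = j + 1)"

end

theory Submission imports Defs begin

abbreviation VV :: "nat \<Rightarrow> nat pvert set" where "VV n \<equiv> pendant_vertices (path_vertices n)"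
abbreviation EE where "EE \<equiv> pendant_adj path_adj"

lemma memV[simp]: "X a \<in> VV n \<longleftrightarrow> 1 \<le> a \<and> a \<le> n" "P a \<in> VV n \<longleftrightarrow> 1 \<le> a \<and> a \<le> n"
  by (auto simp: pendant_vertices_def path_vertices_def)

lemma finV: "finite (VV n)"
  by (simp add: pendant_vertices_def path_vertices_def)

lemma fin_star: "finite (independent_rstar (VV n) EE r v)"
proof -
  have "independent_rstar (VV n) EE r v \<subseteq> Pow (VV n)"
    by (auto simp: independent_rstar_def independent_rsets_def)
  thus ?thesis using finV by (meson finite_Pow_iff finite_subset)
qed

lemma map_inj: "inj_on \<pi> {1..n} \<Longrightarrow> inj_on (map_pvert \<pi>) (VV n)"
proof (rule inj_onI)
  fix x y assume inj: "inj_on \<pi> {1..n}" and xy: "x \<in> VV n" "y \<in> VV n" "map_pvert \<pi> x = map_pvert \<pi> y"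
  show "x = y"
  proof (cases x; cases y)
    fix a b assume "x = X a" "y = X b" thus ?thesis using xy inj_on_eq_iff[OF inj, of a b] by simp
  next
    fix a b assume "x = P a" "y = P b" thus ?thesis using xy inj_on_eq_iff[OF inj, of a b] by simp
  next
    fix a b assume "x = X a" "y = P b" thus ?thesis using xy by simp
  next
    fix a b assume "x = P a" "y = X b" thus ?thesis using xy by simp
  qed
qed

lemma img_indep:
  assumes A: "A \<in> independent_rsets (VV n) EE r" and inj: "inj_on \<pi> {1..n}"
    and rng: "\<pi> ` {1..n} \<subseteq> {1..n}"
    and adj: "\<And>a b. X a \<in> A \<Longrightarrow> X b \<in> A \<Longrightarrow> path_adj (\<pi> a) (\<pi> b) \<Longrightarrow> path_adj a b"
  shows "map_pvert \<pi> ` A \<in> independent_rsets (VV n) EE r"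
proof -
  from A have AV: "A \<subseteq> VV n" and cA: "card A = r" and fA: "finite A"
    and ind: "\<And>x y. x \<in> A \<Longrightarrow> y \<in> A \<Longrightarrow> \<not> EE x y" by (auto simp: independent_rsets_def)
  have sub: "map_pvert \<pi> ` A \<subseteq> VV n"
  proof
    fix z assume "z \<in> map_pvert \<pi> ` A"
    then obtain u where u: "u \<in> A" "z = map_pvert \<pi> u" by auto
    show "z \<in> VV n"
    proof (cases u)
      case (X a)
      hence "a \<in> {1..n}" using u AV by auto
      hence "\<pi> a \<in> {1..n}" using rng by blast
      thus ?thesis using u X by simp
    next
      case (P a)
      hence "a \<in> {1..n}" using u AV by auto
      hence "\<pi> a \<in> {1..n}" using rng by blast
      thus ?thesis using u P by simp
    qed
  qed
  have card: "card (map_pvert \<pi> ` A) = r"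
    using card_image[OF inj_on_subset[OF map_inj[OF inj] AV]] cA by simp
  have ind2: "\<forall>x\<in>map_pvert \<pi> ` A. \<forall>y\<in>map_pvert \<pi> ` A. \<not> EE x y"
  proof (intro ballI)
    fix x y assume "x \<in> map_pvert \<pi> ` A" "y \<in> map_pvert \<pi> ` A"
    then obtain u w where u: "u \<in> A" "x = map_pvert \<pi> u" and w: "w \<in> A" "y = map_pvert \<pi> w" by auto
    show "\<not> EE x y"
    proof (cases u; cases w)
      fix a b assume h: "u = X a" "w = X b"
      have "\<not> path_adj a b" using ind[OF u(1) w(1)] h by simp
      hence "\<not> path_adj (\<pi> a) (\<pi> b)" using adj[of a b] u(1) w(1) h by blast
      thus ?thesis using h u(2) w(2) by simp
    next
      fix a b assume h: "u = X a" "w = P b"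
      have ab: "a \<in> {1..n}" "b \<in> {1..n}" using h u(1) w(1) AV by auto
      have "a \<noteq> b" using ind[OF u(1) w(1)] h by simp
      hence "\<pi> a \<noteq> \<pi> b" using inj_on_eq_iff[OF inj ab] by simp
      thus ?thesis using h u(2) w(2) by simp
    next
      fix a b assume h: "u = P a" "w = X b"
      have ab: "a \<in> {1..n}" "b \<in> {1..n}" using h u(1) w(1) AV by auto
      have "a \<noteq> b" using ind[OF u(1) w(1)] h by simp
      hence "\<pi> a \<noteq> \<pi> b" using inj_on_eq_iff[OF inj ab] by simp
      thus ?thesis using h u(2) w(2) by simp
    next
      fix a b assume h: "u = P a" "w = P b"
      thus ?thesis using u w by simp
    qed
  qed
  show ?thesis using sub card ind2 finite_imageI[OF fA] by (simp add: independent_rsets_def)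
qed

lemma indep_memI: "A \<in> independent_rsets V E r \<Longrightarrow> v \<in> A \<Longrightarrow> A \<in> independent_rstar V E r v"
  by (simp add: independent_rstar_def)

lemma star_D: "A \<in> independent_rstar V E r v \<Longrightarrow> A \<in> independent_rsets V E r \<and> v \<in> A"
  by (simp add: independent_rstar_def)

lemma rsets_sub: "A \<in> independent_rsets V E r \<Longrightarrow> A \<subseteq> V"
  by (simp add: independent_rsets_def)

lemma rsets_noadj: "A \<in> independent_rsets V E r \<Longrightarrow> x \<in> A \<Longrightarrow> y \<in> A \<Longrightarrow> \<not> E x y"
  by (simp add: independent_rsets_def)

lemma card_le_via:
  assumes "inj_on f (independent_rstar (VV n) EE r v)"
    and "f ` independent_rstar (VV n) EE r v \<subseteq> independent_rstar (VV n) EE r w"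
  shows "card (independent_rstar (VV n) EE r v) \<le> card (independent_rstar (VV n) EE r w)"
  using card_inj_on_le[OF assms fin_star] .

lemma img_inj:
  assumes "inj_on \<pi> {1..n}" "A \<subseteq> VV n" "B \<subseteq> VV n" "map_pvert \<pi> ` A = map_pvert \<pi> ` B"
  shows "A = B"
  using inj_on_image_eq_iff[OF map_inj[OF assms(1)] assms(2,3)] assms(4) by simp

lemma star_le_perm:
  assumes inj: "inj_on \<pi> {1..n}" and rng: "\<pi> ` {1..n} \<subseteq> {1..n}"
    and adj: "\<And>A a b. A \<in> independent_rstar (VV n) EE r v \<Longrightarrow> X a \<in> A \<Longrightarrow> X b \<in> A \<Longrightarrow> path_adj (\<pi> a) (\<pi> b) \<Longrightarrow> path_adj a b"
  shows "card (independent_rstar (VV n) EE r v) \<le> card (independent_rstar (VV n) EE r (map_pvert \<pi> v))"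
proof (rule card_le_via[where f = "\<lambda>A. map_pvert \<pi> ` A"])
  show "inj_on (\<lambda>A. map_pvert \<pi> ` A) (independent_rstar (VV n) EE r v)"
  proof (rule inj_onI)
    fix A B assume A: "A \<in> independent_rstar (VV n) EE r v" and B: "B \<in> independent_rstar (VV n) EE r v"
      and eq: "map_pvert \<pi> ` A = map_pvert \<pi> ` B"
    have "A \<subseteq> VV n" using rsets_sub conjunct1[OF star_D[OF A]] .
    moreover have "B \<subseteq> VV n" using rsets_sub conjunct1[OF star_D[OF B]] .
    ultimately show "A = B" using img_inj[OF inj _ _ eq] by blast
  qed
  show "(\<lambda>A. map_pvert \<pi> ` A) ` independent_rstar (VV n) EE r v \<subseteq> independent_rstar (VV n) EE r (map_pvert \<pi> v)"
  proof
    fix B assume "B \<in> (\<lambda>A. map_pvert \<pi> ` A) ` independent_rstar (VV n) EE r v"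
    then obtain A where A: "A \<in> independent_rstar (VV n) EE r v" "B = map_pvert \<pi> ` A" by auto
    have AI: "A \<in> independent_rsets (VV n) EE r" "v \<in> A" using star_D[OF A(1)] by auto
    have "B \<in> independent_rsets (VV n) EE r"
      unfolding A(2)
      by (rule img_indep[OF AI(1) inj rng]) (rule adj[OF A(1)])
    thus "B \<in> independent_rstar (VV n) EE r (map_pvert \<pi> v)"
      using AI(2) A(2) by (auto intro: indep_memI)
  qed
qed

lemma XinV: "A \<in> independent_rstar (VV n) EE r v \<Longrightarrow> X a \<in> A \<Longrightarrow> 1 \<le> a \<and> a \<le> n"
proof -
  assume A: "A \<in> independent_rstar (VV n) EE r v" and a: "X a \<in> A"
  have "A \<subseteq> VV n" using rsets_sub conjunct1[OF star_D[OF A]] .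
  hence "X a \<in> VV n" using a by blast
  thus ?thesis by simp
qed

lemma X_to_P:
  "card (independent_rstar (VV n) EE r (X i)) \<le> card (independent_rstar (VV n) EE r (P i))"
proof (rule card_le_via[where f = "\<lambda>A. insert (P i) (A - {X i})"])
  have key: "P i \<notin> A \<and> X i \<in> A" if A: "A \<in> independent_rstar (VV n) EE r (X i)" for A
  proof -
    have A1: "A \<in> independent_rsets (VV n) EE r" and A2: "X i \<in> A" using star_D[OF A] by auto
    show ?thesis
    proof (intro conjI notI A2)
      assume "P i \<in> A"
      from rsets_noadj[OF A1 A2 this] show False by simp
    qed
  qed
  show "inj_on (\<lambda>A. insert (P i) (A - {X i})) (independent_rstar (VV n) EE r (X i))"
  proof (rule inj_onI)
    fix A B assume A: "A \<in> independent_rstar (VV n) EE r (X i)" and B: "B \<in> independent_rstar (VV n) EE r (X i)"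
      and eq: "insert (P i) (A - {X i}) = insert (P i) (B - {X i})"
    have "A = insert (X i) (insert (P i) (A - {X i}) - {P i})" using key[OF A] by auto
    also have "\<dots> = insert (X i) (insert (P i) (B - {X i}) - {P i})" using eq by simp
    also have "\<dots> = B" using key[OF B] by auto
    finally show "A = B" .
  qed
  show "(\<lambda>A. insert (P i) (A - {X i})) ` independent_rstar (VV n) EE r (X i) \<subseteq> independent_rstar (VV n) EE r (P i)"
  proof
    fix B assume "B \<in> (\<lambda>A. insert (P i) (A - {X i})) ` independent_rstar (VV n) EE r (X i)"
    then obtain A where A: "A \<in> independent_rstar (VV n) EE r (X i)" and B: "B = insert (P i) (A - {X i})" by auto
    have A1: "A \<in> independent_rsets (VV n) EE r" and A2: "X i \<in> A" using star_D[OF A] by auto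
    have AV: "A \<subseteq> VV n" and cA: "card A = r" and fA: "finite A"
      using A1 by (auto simp: independent_rsets_def)
    have Pn: "P i \<notin> A" using key[OF A] by blast
    have "X i \<in> VV n" using AV A2 by blast
    hence PV: "P i \<in> VV n" by simp
    have BV: "B \<subseteq> VV n" using AV PV B by blast
    have fB: "finite B" using fA B by simp
    have "card B = Suc (card (A - {X i}))" using B Pn fA by (simp add: card_insert_disjoint)
    also have "\<dots> = card A" using card_Diff_singleton[OF A2] fA A2 card_gt_0_iff[of A] by auto
    finally have cB: "card B = r" using cA by simp
    have iB: "\<forall>x\<in>B. \<forall>y\<in>B. \<not> EE x y"
    proof (intro ballI)
      fix x y assume x: "x \<in> B" and y: "y \<in> B"
      show "\<not> EE x y"
      proof (cases "x = P i"; cases "y = P i")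
        assume "x = P i" "y = P i" thus ?thesis by simp
      next
        assume h: "x = P i" "y \<noteq> P i"
        hence "y \<in> A" "y \<noteq> X i" using y B by auto
        thus ?thesis using h by (cases y) auto
      next
        assume h: "x \<noteq> P i" "y = P i"
        hence "x \<in> A" "x \<noteq> X i" using x B by auto
        thus ?thesis using h by (cases x) auto
      next
        assume h: "x \<noteq> P i" "y \<noteq> P i"
        hence "x \<in> A" "y \<in> A" using x y B by auto
        thus ?thesis using rsets_noadj[OF A1] by blast
      qed
    qed
    have "B \<in> independent_rsets (VV n) EE r" using BV cB fB iB by (simp add: independent_rsets_def)
    thus "B \<in> independent_rstar (VV n) EE r (P i)" using B by (simp add: indep_memI)
  qed
qed

definition sg :: "nat \<Rightarrow> nat \<Rightarrow> nat" where
  "sg i j = (if 2 \<le> j \<and> j \<le> i then i + 2 - j else j)"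
definition sg' :: "nat \<Rightarrow> nat \<Rightarrow> nat" where
  "sg' i j = (if j = 1 then i + 1 else if j = i + 1 then 1 else sg i j)"

lemma sg_in: "2 \<le> j \<Longrightarrow> j \<le> i \<Longrightarrow> sg i j = i + 2 - j"
  unfolding sg_def by simp
lemma sg_out: "\<not> (2 \<le> j \<and> j \<le> i) \<Longrightarrow> sg i j = j"
  unfolding sg_def by (rule if_not_P)
lemma sg_invol: "sg i (sg i j) = j"
proof (cases "2 \<le> j \<and> j \<le> i")
  case True
  hence a: "sg i j = i + 2 - j" by (simp add: sg_in)
  have b: "2 \<le> i + 2 - j" "i + 2 - j \<le> i" using True by arith+
  have "sg i (i + 2 - j) = i + 2 - (i + 2 - j)" using sg_in[OF b] .
  also have "\<dots> = j" using True by arith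
  finally show ?thesis using a by simp
next
  case False thus ?thesis by (simp add: sg_out)
qed
lemma sg'_invol: "sg' i (sg' i j) = j"
proof -
  consider "j = 1" | "j \<noteq> 1" "j = i + 1" | "j \<noteq> 1" "j \<noteq> i + 1" by blast
  thus ?thesis
  proof cases
    case 1 thus ?thesis by (simp add: sg'_def)
  next
    case 2 thus ?thesis by (simp add: sg'_def)
  next
    case 3
    hence a: "sg' i j = sg i j" by (simp add: sg'_def)
    have "sg i j \<noteq> 1 \<and> sg i j \<noteq> i + 1"
    proof (cases "2 \<le> j \<and> j \<le> i")
      case True
      hence "sg i j = i + 2 - j" by (simp add: sg_in)
      thus ?thesis using True by arith
    next
      case False thus ?thesis using 3 by (simp add: sg_out)
    qed
    hence "sg' i (sg i j) = sg i (sg i j)" by (simp add: sg'_def)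
    thus ?thesis using a sg_invol by simp
  qed
qed
lemma invol_inj: "(\<And>j. f (f j) = j) \<Longrightarrow> inj_on f A"
  by (rule inj_onI) metis
lemma sg_inj: "inj_on (sg i) {1..n}"
  by (rule invol_inj) (rule sg_invol)
lemma sg'_inj: "inj_on (sg' i) {1..n}"
  by (rule invol_inj) (rule sg'_invol)
lemma sg_rng: assumes "i \<le> n" shows "sg i ` {1..n} \<subseteq> {1..n}"
proof (rule image_subsetI)
  fix x assume x: "x \<in> {1..n}"
  show "sg i x \<in> {1..n}"
  proof (cases "2 \<le> x \<and> x \<le> i")
    case True
    hence "sg i x = i + 2 - x" by (simp add: sg_in)
    thus ?thesis using True assms by simp arith
  next
    case False thus ?thesis using x by (simp add: sg_out)
  qed
qed
lemma sg'_rng: assumes "i + 1 \<le> n" shows "sg' i ` {1..n} \<subseteq> {1..n}"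
proof (rule image_subsetI)
  fix x assume x: "x \<in> {1..n}"
  have "i \<le> n" using assms by simp
  hence "sg i x \<in> {1..n}" using sg_rng[of i n] x by blast
  thus "sg' i x \<in> {1..n}" using assms by (simp add: sg'_def)
qed
definition sw :: "nat \<Rightarrow> nat" where
  "sw j = (if j = 1 then 2 else if j = 2 then 1 else j)"
definition rh :: "nat \<Rightarrow> nat \<Rightarrow> nat" where
  "rh n j = n + 1 - j"
lemma sw_inj: "inj_on sw {1..n}"
  by (rule invol_inj) (simp add: sw_def)
lemma sw_rng: "2 \<le> n \<Longrightarrow> sw ` {1..n} \<subseteq> {1..n}"
  by (auto simp: sw_def)
lemma rh_inj: "inj_on (rh n) {1..n}"
proof (rule inj_onI)
  fix x y assume "x \<in> {1..n}" "y \<in> {1..n}" "rh n x = rh n y"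
  thus "x = y" unfolding rh_def atLeastAtMost_iff by arith
qed
lemma rh_rng: "rh n ` {1..n} \<subseteq> {1..n}"
proof (rule image_subsetI)
  fix x assume "x \<in> {1..n}" thus "rh n x \<in> {1..n}" unfolding rh_def atLeastAtMost_iff by arith
qed
lemma sg_adj: "3 \<le> i \<Longrightarrow> 1 \<le> a \<Longrightarrow> 1 \<le> b \<Longrightarrow> path_adj (sg i a) (sg i b) \<Longrightarrow>
   path_adj a b \<or> (a = 1 \<and> b = i) \<or> (a = i \<and> b = 1) \<or> (a = 2 \<and> b = i + 1) \<or> (a = i + 1 \<and> b = 2)"
  unfolding sg_def path_adj_def by (auto split: if_splits)
lemma sg'_adj: "3 \<le> i \<Longrightarrow> 1 \<le> a \<Longrightarrow> 1 \<le> b \<Longrightarrow> path_adj (sg' i a) (sg' i b) \<Longrightarrow>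
   path_adj a b \<or> (a = 1 \<and> b = i + 2) \<or> (a = i + 2 \<and> b = 1)"
  unfolding sg'_def sg_def path_adj_def by (simp split: if_splits; linarith)
lemma sw_adj: "1 \<le> a \<Longrightarrow> 1 \<le> b \<Longrightarrow> path_adj (sw a) (sw b) \<Longrightarrow>
   path_adj a b \<or> (a = 1 \<and> b = 3) \<or> (a = 3 \<and> b = 1)"
  unfolding sw_def path_adj_def by (auto split: if_splits)
lemma rh_adj: "a \<in> {1..n} \<Longrightarrow> b \<in> {1..n} \<Longrightarrow> path_adj (rh n a) (rh n b) \<Longrightarrow> path_adj a b"
  unfolding rh_def path_adj_def by auto

lemma P1_le: assumes "2 \<le> n"
  shows "card (independent_rstar (VV n) EE r (P 1)) \<le> card (independent_rstar (VV n) EE r (P 2))"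
proof -
  have "card (independent_rstar (VV n) EE r (P 1)) \<le> card (independent_rstar (VV n) EE r (map_pvert sw (P 1)))"
  proof (rule star_le_perm[OF sw_inj sw_rng[OF assms]])
    fix A a b assume A: "A \<in> independent_rstar (VV n) EE r (P 1)" and ab: "X a \<in> A" "X b \<in> A" "path_adj (sw a) (sw b)"
    have "X 1 \<notin> A" using star_D[OF A] rsets_noadj by fastforce
    thus "path_adj a b" using sw_adj[OF _ _ ab(3)] XinV[OF A ab(1)] XinV[OF A ab(2)] ab by auto
  qed
  thus ?thesis by (simp add: sw_def)
qed

lemma rh_le: assumes "1 \<le> i" "i \<le> n"
  shows "card (independent_rstar (VV n) EE r (P i)) \<le> card (independent_rstar (VV n) EE r (P (n + 1 - i)))"
proof -
  have "card (independent_rstar (VV n) EE r (P i)) \<le> card (independent_rstar (VV n) EE r (map_pvert (rh n) (P i)))"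
  proof (rule star_le_perm[OF rh_inj rh_rng])
    fix A a b assume A: "A \<in> independent_rstar (VV n) EE r (P i)" and ab: "X a \<in> A" "X b \<in> A" "path_adj (rh n a) (rh n b)"
    show "path_adj a b" using rh_adj[OF _ _ ab(3)] XinV[OF A ab(1)] XinV[OF A ab(2)] by auto
  qed
  thus ?thesis by (simp add: rh_def)
qed


lemma Pi_le: assumes i3: "3 \<le> i" and "i \<le> n"
  shows "card (independent_rstar (VV n) EE r (P i)) \<le> card (independent_rstar (VV n) EE r (P 2))"
proof (rule card_le_via[where f = "\<lambda>A. if X 2 \<in> A \<and> X (i + 1) \<in> A then map_pvert (sg' i) ` A else map_pvert (sg i) ` A"])
  let ?S = "independent_rstar (VV n) EE r (P i)"
  have sgi: "sg i i = 2" "sg' i i = 2" using i3 by (auto simp: sg_def sg'_def)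
  have noXi: "X i \<notin> A" if "A \<in> ?S" for A
  proof
    assume h: "X i \<in> A"
    have "A \<in> independent_rsets (VV n) EE r" "P i \<in> A" using star_D[OF that] by auto
    from rsets_noadj[OF this(1) h this(2)] show False by simp
  qed
  have noX1: "X 1 \<notin> A" if "A \<in> ?S" "X 2 \<in> A" for A
  proof
    assume h: "X 1 \<in> A"
    have "A \<in> independent_rsets (VV n) EE r" using star_D[OF that(1)] by auto
    from rsets_noadj[OF this h that(2)] show False by (simp add: path_adj_def)
  qed
  show "(\<lambda>A. if X 2 \<in> A \<and> X (i + 1) \<in> A then map_pvert (sg' i) ` A else map_pvert (sg i) ` A) ` ?S
     \<subseteq> independent_rstar (VV n) EE r (P 2)"
  proof
    fix B assume "B \<in> (\<lambda>A. if X 2 \<in> A \<and> X (i + 1) \<in> A then map_pvert (sg' i) ` A else map_pvert (sg i) ` A) ` ?S"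
    then obtain A where A: "A \<in> ?S" and B: "B = (if X 2 \<in> A \<and> X (i + 1) \<in> A then map_pvert (sg' i) ` A else map_pvert (sg i) ` A)" by auto
    have AI: "A \<in> independent_rsets (VV n) EE r" "P i \<in> A" using star_D[OF A] by auto
    show "B \<in> independent_rstar (VV n) EE r (P 2)"
    proof (cases "X 2 \<in> A \<and> X (i + 1) \<in> A")
      case True
      have "i + 1 \<le> n" using XinV[OF A] True by blast
      have "map_pvert (sg' i) ` A \<in> independent_rsets (VV n) EE r"
      proof (rule img_indep[OF AI(1) sg'_inj sg'_rng[OF \<open>i + 1 \<le> n\<close>]])
        fix a b assume ab: "X a \<in> A" "X b \<in> A" "path_adj (sg' i a) (sg' i b)"
        have d: "path_adj a b \<or> (a = 1 \<and> b = i + 2) \<or> (a = i + 2 \<and> b = 1)"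
          using sg'_adj[OF i3 _ _ ab(3)] XinV[OF A ab(1)] XinV[OF A ab(2)] by blast
        have "a \<noteq> 1" "b \<noteq> 1" using ab(1,2) noX1[OF A] True by blast+
        thus "path_adj a b" using d by blast
      qed
      moreover have "P 2 \<in> map_pvert (sg' i) ` A"
      proof -
        have "map_pvert (sg' i) (P i) = P 2" using sgi by simp
        thus ?thesis using AI(2) by (metis image_eqI)
      qed
      moreover have "B = map_pvert (sg' i) ` A" unfolding B using True by (rule if_P)
      ultimately show ?thesis by (metis indep_memI)
    next
      case False
      have "map_pvert (sg i) ` A \<in> independent_rsets (VV n) EE r"
      proof (rule img_indep[OF AI(1) sg_inj sg_rng[OF \<open>i \<le> n\<close>]])
        fix a b assume ab: "X a \<in> A" "X b \<in> A" "path_adj (sg i a) (sg i b)"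
        have d: "path_adj a b \<or> (a = 1 \<and> b = i) \<or> (a = i \<and> b = 1) \<or> (a = 2 \<and> b = i + 1) \<or> (a = i + 1 \<and> b = 2)"
          using sg_adj[OF i3 _ _ ab(3)] XinV[OF A ab(1)] XinV[OF A ab(2)] by blast
        have "a \<noteq> i" "b \<noteq> i" using ab(1,2) noXi[OF A] by blast+
        moreover have "\<not> (a = 2 \<and> b = i + 1)" "\<not> (a = i + 1 \<and> b = 2)" using ab(1,2) False by blast+
        ultimately show "path_adj a b" using d by blast
      qed
      moreover have "P 2 \<in> map_pvert (sg i) ` A"
      proof -
        have "map_pvert (sg i) (P i) = P 2" using sgi by simp
        thus ?thesis using AI(2) by (metis image_eqI)
      qed
      moreover have "B = map_pvert (sg i) ` A" unfolding B using False by (rule if_not_P)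
      ultimately show ?thesis by (metis indep_memI)
    qed
  qed
  have crossA: "\<not> (X 1 \<in> map_pvert (sg i) ` A \<and> X i \<in> map_pvert (sg i) ` A)" if A: "A \<in> ?S" for A
  proof
    assume h: "X 1 \<in> map_pvert (sg i) ` A \<and> X i \<in> map_pvert (sg i) ` A"
    then obtain u w where u: "u \<in> A" "X 1 = map_pvert (sg i) u" and w: "w \<in> A" "X i = map_pvert (sg i) w" by blast
    obtain a where a: "u = X a" using u(2) by (cases u) auto
    obtain b where b: "w = X b" using w(2) by (cases w) auto
    have "sg i a = 1" using u(2) a by simp
    hence a1: "a = 1" using sg_invol[of i a] sg_out[of 1 i] by simp
    have "sg i b = i" using w(2) b by simp
    hence b2: "b = 2" using sg_invol[of i b] sgi(1) by simp
    have "A \<in> independent_rsets (VV n) EE r" using star_D[OF A] by blast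
    from rsets_noadj[OF this] u(1) w(1) a b a1 b2 have "\<not> path_adj 1 2" by force
    thus False by (simp add: path_adj_def)
  qed
  have crossB: "X 1 \<in> map_pvert (sg' i) ` A \<and> X i \<in> map_pvert (sg' i) ` A" if "X 2 \<in> A \<and> X (i + 1) \<in> A" for A
  proof -
    have "sg' i (i+1) = 1" using i3 by (simp add: sg'_def)
    moreover have "sg' i 2 = i" using i3 by (simp add: sg'_def sg_def)
    ultimately have "map_pvert (sg' i) (X (i+1)) = X 1" "map_pvert (sg' i) (X 2) = X i" by simp_all
    thus ?thesis using that by (metis image_eqI)
  qed
  show "inj_on (\<lambda>A. if X 2 \<in> A \<and> X (i + 1) \<in> A then map_pvert (sg' i) ` A else map_pvert (sg i) ` A) ?S"
  proof (rule inj_onI)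
    fix A B assume A: "A \<in> ?S" and B: "B \<in> ?S" and eq: "(if X 2 \<in> A \<and> X (i + 1) \<in> A then map_pvert (sg' i) ` A else map_pvert (sg i) ` A) =
      (if X 2 \<in> B \<and> X (i + 1) \<in> B then map_pvert (sg' i) ` B else map_pvert (sg i) ` B)"
    have sA: "A \<subseteq> VV n" using rsets_sub conjunct1[OF star_D[OF A]] .
    have sB: "B \<subseteq> VV n" using rsets_sub conjunct1[OF star_D[OF B]] .
    let ?f = "\<lambda>A. if X 2 \<in> A \<and> X (i + 1) \<in> A then map_pvert (sg' i) ` A else map_pvert (sg i) ` A"
    show "A = B"
    proof (cases "X 2 \<in> A \<and> X (i + 1) \<in> A"; cases "X 2 \<in> B \<and> X (i + 1) \<in> B")
      assume h: "X 2 \<in> A \<and> X (i + 1) \<in> A" "X 2 \<in> B \<and> X (i + 1) \<in> B"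
      have "?f A = map_pvert (sg' i) ` A" using h(1) by (rule if_P)
      moreover have "?f B = map_pvert (sg' i) ` B" using h(2) by (rule if_P)
      ultimately show ?thesis using eq img_inj[OF sg'_inj[of i] sA sB] by argo
    next
      assume h: "X 2 \<in> A \<and> X (i + 1) \<in> A" "\<not> (X 2 \<in> B \<and> X (i + 1) \<in> B)"
      have "?f A = map_pvert (sg' i) ` A" using h(1) by (rule if_P)
      moreover have "?f B = map_pvert (sg i) ` B" using h(2) by (rule if_not_P)
      ultimately have "map_pvert (sg' i) ` A = map_pvert (sg i) ` B" using eq by argo
      thus ?thesis using crossA[OF B] crossB[OF h(1)] by argo
    next
      assume h: "\<not> (X 2 \<in> A \<and> X (i + 1) \<in> A)" "X 2 \<in> B \<and> X (i + 1) \<in> B"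
      have "?f A = map_pvert (sg i) ` A" using h(1) by (rule if_not_P)
      moreover have "?f B = map_pvert (sg' i) ` B" using h(2) by (rule if_P)
      ultimately have "map_pvert (sg i) ` A = map_pvert (sg' i) ` B" using eq by argo
      thus ?thesis using crossA[OF A] crossB[OF h(2)] by argo
    next
      assume h: "\<not> (X 2 \<in> A \<and> X (i + 1) \<in> A)" "\<not> (X 2 \<in> B \<and> X (i + 1) \<in> B)"
      have "?f A = map_pvert (sg i) ` A" using h(1) by (rule if_not_P)
      moreover have "?f B = map_pvert (sg i) ` B" using h(2) by (rule if_not_P)
      ultimately show ?thesis using eq img_inj[OF sg_inj[of i] sA sB] by argo
    qed
  qed
qed

lemma Pall_le: assumes "2 \<le> n" "1 \<le> i" "i \<le> n"
  shows "card (independent_rstar (VV n) EE r (P i)) \<le> card (independent_rstar (VV n) EE r (P 2))"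
proof -
  consider "i = 1" | "i = 2" | "3 \<le> i" using assms by linarith
  thus ?thesis
  proof cases
    case 1 thus ?thesis using P1_le[OF assms(1)] by simp
  next
    case 2 thus ?thesis by simp
  next
    case 3 thus ?thesis using Pi_le assms by blast
  qed
qed

theorem theorem5:
  fixes n r :: nat and v :: "nat pvert"
  assumes "n \<ge> 2" and "1 \<le> r" and "r \<le> n"
    and "v \<in> pendant_vertices (path_vertices n)"
  shows "card (independent_rstar (pendant_vertices (path_vertices n)) (pendant_adj path_adj) r v)
           \<le> card (independent_rstar (pendant_vertices (path_vertices n)) (pendant_adj path_adj) r (P 2))
       \<and> card (independent_rstar (pendant_vertices (path_vertices n)) (pendant_adj path_adj) r (P 2))
           = card (independent_rstar (pendant_vertices (path_vertices n)) (pendant_adj path_adj) r (P (n - 1)))"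
proof
  show "card (independent_rstar (VV n) EE r v) \<le> card (independent_rstar (VV n) EE r (P 2))"
  proof (cases v)
    case (X i)
    hence "1 \<le> i" "i \<le> n" using assms(4) by auto
    thus ?thesis using X X_to_P[of n r i] Pall_le[OF assms(1)] by (meson le_trans)
  next
    case (P i)
    hence "1 \<le> i" "i \<le> n" using assms(4) by auto
    thus ?thesis using P Pall_le[OF assms(1)] by blast
  qed
  have e1: "n + 1 - 2 = n - 1" and e2: "n + 1 - (n - 1) = 2" using assms(1) by arith+
  have h1: "1 \<le> (2::nat)" "2 \<le> n" "1 \<le> n - 1" "n - 1 \<le> n" using assms(1) by arith+
  have c1: "card (independent_rstar (VV n) EE r (P 2)) \<le> card (independent_rstar (VV n) EE r (P (n - 1)))"
    using rh_le[OF h1(1,2), of r, unfolded e1] .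
  have c2: "card (independent_rstar (VV n) EE r (P (n - 1))) \<le> card (independent_rstar (VV n) EE r (P 2))"
    using rh_le[OF h1(3,4), of r, unfolded e2] .
  show "card (independent_rstar (VV n) EE r (P 2)) = card (independent_rstar (VV n) EE r (P (n - 1)))"
    using c1 c2 by (rule antisym)
qed

end
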